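(* Let $n\ge1$, $N=2n+1$, and let $(a_j)_{j\ge0}$ be complex numbers with $|a_j|\le (j+2)^{-2}$ for all $j\ge 0$. Let $f(z)=-\sum_{j=0}^\infty a_jz^j$, let $z_1,\dots,z_N$ be the roots of $P_n(f;z)$ (with multiplicity) and $\lambda_k:=z_k^{-1}$. Then \[S_{j+1}(\lambda)-a_j=0,\qquad j=0,\dots,n-1,\] \[|S_{j+1}(\lambda)-a_j|\le\frac{r^{n-j}}{1-r^{n+1}}\left(15n+\frac{30}{1-r}\right),\qquad j\ge n,\] where $r\in(0,1)$ is arbitrary.
   Context: For $f$ analytic in the unit disc, $s_n(z)=s_n(f;z)$ denotes the $n$-th Taylor polynomial of $\exp\left(\int_0^z f(\zeta)\,d\zeta\right)$ (so $s_n(0)=1$), and $P_n(f;z):=s_n(z)+z^{2n+1}\overline{s}_n(1/z)$, where $\overline{s}_n$ is the polynomial with complex-conjugated coefficients; it has degree $2n+1$ and $P_n(0)=1$. For $\lambda_1,\dots,\lambda_N$, $S_\nu(\lambda)=\lambda_1^\nu+\dots+\lambda_N^\nu$. *)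

theory Defs
  imports "HOL-Complex_Analysis.Complex_Analysis" "HOL-Computational_Algebra.Polynomial"
begin

definition fser :: "(nat \<Rightarrow> complex) \<Rightarrow> complex \<Rightarrow> complex" where
  "fser a z = - (\<Sum>j. a j * z ^ j)"

definition expint :: "(complex \<Rightarrow> complex) \<Rightarrow> complex \<Rightarrow> complex" where
  "expint f z = exp (contour_integral (linepath 0 z) f)"

definition tcoeff :: "(complex \<Rightarrow> complex) \<Rightarrow> nat \<Rightarrow> complex" where
  "tcoeff f k = (deriv ^^ k) (expint f) 0 / of_nat (fact k)"

definition s_poly :: "(complex \<Rightarrow> complex) \<Rightarrow> nat \<Rightarrow> complex poly" where
  "s_poly f n = (\<Sum>k\<le>n. monom (tcoeff f k) k)"

text \<open>P_n(f;z) = s_n(z) + z^(2n+1) conj(s_n)(1/z).\<close>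
definition P_poly :: "(complex \<Rightarrow> complex) \<Rightarrow> nat \<Rightarrow> complex poly" where
  "P_poly f n = s_poly f n + (\<Sum>k\<le>n. monom (cnj (tcoeff f k)) (2 * n + 1 - k))"

definition Spow :: "complex list \<Rightarrow> nat \<Rightarrow> complex" where
  "Spow zs \<nu> = (\<Sum>z\<leftarrow>zs. (1 / z) ^ \<nu>)"

end

theory Submission
  imports Defs
begin


lemma a_summable:
  fixes a :: "nat \<Rightarrow> complex"
  assumes ab: "\<And>j. norm (a j) \<le> 1 / (real j + 2) ^ 2"
  shows "summable (\<lambda>j. norm (a j))"
proof (rule summable_comparison_test'[where N=1])
  show "summable (\<lambda>n. inverse (real n ^ 2))" by (rule inverse_power_summable) simp
  fix j :: nat assume "j \<ge> 1"
  have "1 / (real j + 2) ^ 2 \<le> inverse (real j ^ 2)"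
    using \<open>j \<ge> 1\<close> by (simp add: divide_simps power_mono)
  then show "norm (norm (a j)) \<le> inverse (real j ^ 2)" using ab[of j] by simp
qed

lemma radius_ge1:
  fixes a :: "nat \<Rightarrow> complex"
  assumes ab: "\<And>j. norm (a j) \<le> 1 / (real j + 2) ^ 2"
  shows "fps_conv_radius (Abs_fps a) \<ge> 1"
proof -
  have "summable (\<lambda>j. a j * 1 ^ j)"
    using summable_norm_cancel[OF a_summable[OF ab]] by simp
  from conv_radius_geI[OF this] show ?thesis by (simp add: fps_conv_radius_def one_ereal_def)
qed

lemma fser_eq: "fser a z = - eval_fps (Abs_fps a) z"
  by (simp add: fser_def eval_fps_def)

lemma analytic_part:
  fixes a :: "nat \<Rightarrow> complex"
  assumes ab: "\<And>j. norm (a j) \<le> 1 / (real j + 2) ^ 2"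
  defines "E \<equiv> Abs_fps (tcoeff (fser a))"
  shows "tcoeff (fser a) 0 = 1" and "fps_deriv E = - Abs_fps a * E"
proof -
  let ?f = "fser a"
  let ?S = "ball (0::complex) 1"
  have holf: "?f holomorphic_on ?S"
  proof -
    have "eval_fps (Abs_fps a) holomorphic_on eball 0 (fps_conv_radius (Abs_fps a))"
      by (rule holomorphic_on_eval_fps) simp
    moreover have "?S \<subseteq> eball 0 (fps_conv_radius (Abs_fps a))"
    proof
      fix x :: complex assume "x \<in> ?S"
      then have "ereal (cmod x) < ereal 1" by simp
      also have "ereal 1 \<le> fps_conv_radius (Abs_fps a)" using radius_ge1[OF ab] by (simp add: one_ereal_def)
      finally show "x \<in> eball 0 (fps_conv_radius (Abs_fps a))" by simp
    qed
    ultimately have "eval_fps (Abs_fps a) holomorphic_on ?S" by (rule holomorphic_on_subset)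
    then have "(\<lambda>z. - eval_fps (Abs_fps a) z) holomorphic_on ?S" by (rule holomorphic_on_minus)
    then show ?thesis by (simp add: fser_eq[abs_def])
  qed
  obtain g where g: "\<And>x. x \<in> ?S \<Longrightarrow> (g has_field_derivative ?f x) (at x within ?S)"
    using holomorphic_convex_primitive'[OF convex_ball open_ball holf] by blast
  have ci: "contour_integral (linepath 0 z) ?f = g z - g 0" if "z \<in> ?S" for z
  proof -
    have "path_image (linepath 0 z) \<subseteq> ?S"
      using that by (simp add: path_image_linepath segment_convex_hull hull_minimal convex_ball)
    from contour_integral_primitive[OF g valid_path_linepath this]
    show ?thesis by (simp add: contour_integral_unique)
  qed
  define H where "H z = exp (g z - g 0)" for z
  have FH: "expint ?f z = H z" if "z \<in> ?S" for z
    using ci[OF that] by (simp add: expint_def H_def)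
  have gd: "(g has_field_derivative ?f x) (at x)" if "x \<in> ?S" for x
  proof -
    have e: "at x within ?S = at x" by (rule at_within_open[OF that open_ball])
    show ?thesis using g[OF that] unfolding e .
  qed
  have Hd: "(H has_field_derivative ?f x * H x) (at x)" if "x \<in> ?S" for x
    unfolding H_def using gd[OF that]
    by (auto intro!: derivative_eq_intros)
  have Fd: "(expint ?f has_field_derivative ?f x * expint ?f x) (at x)" if "x \<in> ?S" for x
  proof -
    have "(expint ?f has_field_derivative ?f x * H x) (at x)"
      by (rule has_field_derivative_transform_within_open[OF Hd[OF that] open_ball that]) (simp add: FH)
    then show ?thesis using FH[OF that] by simp
  qed
  have holF: "expint ?f holomorphic_on ?S"
    unfolding holomorphic_on_open[OF open_ball] using Fd by (metis mem_ball_0)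
  have expF: "expint ?f has_fps_expansion E"
  proof -
    have "expint ?f has_fps_expansion fps_expansion (expint ?f) 0"
      by (rule has_fps_expansion_fps_expansion[OF open_ball _ holF]) simp
    moreover have "fps_expansion (expint ?f) 0 = E"
      by (simp add: E_def fps_expansion_def fps_eq_iff tcoeff_def)
    ultimately show ?thesis by simp
  qed
  show "tcoeff ?f 0 = 1" by (simp add: tcoeff_def expint_def)
  have f_exp: "?f has_fps_expansion - Abs_fps a"
  proof -
    have "eval_fps (Abs_fps a) has_fps_expansion Abs_fps a"
    proof (rule eval_fps_has_fps_expansion)
      have "(0::ereal) < 1" by simp
      also have "1 \<le> fps_conv_radius (Abs_fps a)" by (rule radius_ge1[OF ab])
      finally show "0 < fps_conv_radius (Abs_fps a)" .
    qed
    then have "(\<lambda>z. - eval_fps (Abs_fps a) z) has_fps_expansion - Abs_fps a"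
      by (rule has_fps_expansion_minus)
    then show ?thesis by (simp add: fser_eq[abs_def])
  qed
  have e1: "deriv (expint ?f) has_fps_expansion fps_deriv E"
    by (rule has_fps_expansion_deriv[OF expF])
  have e2: "(\<lambda>x. ?f x * expint ?f x) has_fps_expansion - Abs_fps a * E"
    by (rule has_fps_expansion_mult[OF f_exp expF])
  have ev: "eventually (\<lambda>x. deriv (expint ?f) x = ?f x * expint ?f x) (nhds 0)"
  proof -
    have "eventually (\<lambda>x. x \<in> ?S) (nhds 0)" by (rule eventually_nhds_in_open) auto
    then show ?thesis by eventually_elim (use Fd DERIV_imp_deriv in blast)
  qed
  have e3: "deriv (expint ?f) has_fps_expansion - Abs_fps a * E"
    using e2 ev unfolding has_fps_expansion_def
    by (auto elim: eventually_elim2)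
  show "fps_deriv E = - Abs_fps a * E"
    by (rule fps_expansion_unique_complex[OF e1 e3])
qed



lemma sq_sum_aux: "(\<Sum>i<m. 1/(real i+2)^2) \<le> 2/3 - 1/(real m + 3/2)"
proof (induction m)
  case 0 then show ?case by simp
next
  case (Suc m)
  have e: "1/(real m + 3/2) - 1/(real m + 5/2) = 1/((real m + 3/2)*(real m + 5/2))"
    by (simp add: field_simps)
  have "(real m + 3/2)*(real m + 5/2) \<le> (real m+2)^2" by (simp add: power2_eq_square algebra_simps)
  then have "1/(real m+2)^2 \<le> 1/((real m + 3/2)*(real m + 5/2))"
    by (intro divide_left_mono) auto
  then have "1/(real m+2)^2 \<le> 1/(real m + 3/2) - 1/(real m + 5/2)" using e by simp
  moreover have "real (Suc m) + 3/2 = real m + 5/2" by simp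
  ultimately show ?case using Suc by (simp only: sum.lessThan_Suc)
qed

lemma sq_sum: "(\<Sum>i<m. 1/(real i+2)^2) \<le> 2/3"
  using sq_sum_aux[of m] by (smt (verit) divide_pos_pos of_nat_0_le_iff)

lemma coef_sum_bound:
  fixes a c :: "nat \<Rightarrow> complex"
  assumes c0: "c 0 = 1"
    and rec: "\<And>k. of_nat (k+1) * c (k+1) = - (\<Sum>i\<le>k. a i * c (k-i))"
    and ab: "\<And>j. norm (a j) \<le> 1 / (real j + 2) ^ 2"
  shows "(\<Sum>k\<in>{1..n}. norm (c k)) \<le> 11/16"
proof (cases "n = 0")
  case True then show ?thesis by simp
next
  case False
  define u where "u k = norm (c k)" for k
  define U where "U = (\<Sum>k\<in>{1..n}. u k)"
  have u0: "u k \<ge> 0" for k by (simp add: u_def)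
  have step: "real (k+1) * u (k+1) \<le> (\<Sum>i\<le>k. norm (a i) * u (k-i))" for k
  proof -
    have "real (k+1) * u (k+1) = norm (of_nat (k+1) * c (k+1))"
      by (simp only: u_def norm_mult norm_of_nat)
    also have "\<dots> = norm (\<Sum>i\<le>k. a i * c (k-i))" by (simp only: rec norm_minus_cancel)
    also have "\<dots> \<le> (\<Sum>i\<le>k. norm (a i * c (k-i)))" by (rule norm_sum)
    finally show ?thesis by (simp add: u_def norm_mult)
  qed
  have u1: "u 1 \<le> 1/4"
  proof -
    have "c 1 = - (a 0 * c 0)" using rec[of 0] by simp
    then have "u 1 = norm (a 0)" using c0 by (simp add: u_def)
    then show ?thesis using ab[of 0] by simp
  qed
  have "(\<Sum>k\<in>{1..n}. real k * u k) = (\<Sum>k<n. real (Suc k) * u (Suc k))"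
    by (rule sum_bounds_lt_plus1[symmetric])
  also have "\<dots> \<le> (\<Sum>k<n. \<Sum>i\<le>k. norm (a i) * u (k-i))"
    by (rule sum_mono) (use step in simp)
  also have "\<dots> = (\<Sum>(i,j)\<in>{(i,j). i+j < n}. norm (a i) * u j)"
    by (rule sum.triangle_reindex[symmetric])
  also have "\<dots> \<le> (\<Sum>(i,j)\<in>{..<n}\<times>{..<n}. norm (a i) * u j)"
    by (rule sum_mono2) (auto simp: u0)
  also have "\<dots> = (\<Sum>i<n. norm (a i)) * (\<Sum>j<n. u j)"
    by (simp add: sum_product sum.cartesian_product)
  also have "\<dots> \<le> (2/3) * (1 + U)"
  proof (rule mult_mono)
    have "(\<Sum>i<n. norm (a i)) \<le> (\<Sum>i<n. 1/(real i+2)^2)" by (rule sum_mono) (use ab in auto)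
    then show "(\<Sum>i<n. norm (a i)) \<le> 2/3" using sq_sum[of n] by linarith
    have "(\<Sum>j<n. u j) \<le> (\<Sum>j\<le>n. u j)" by (rule sum_mono2) (auto simp: u0)
    also have "{..n} = insert 0 {1..n}" by auto
    then have "(\<Sum>j\<le>n. u j) = u 0 + U" by (simp add: U_def)
    finally show "(\<Sum>j<n. u j) \<le> 1 + U" using c0 by (simp add: u_def)
    show "0 \<le> (2/3::real)" by simp
    show "0 \<le> (\<Sum>j<n. u j)" by (simp add: sum_nonneg u0)
  qed
  finally have up: "(\<Sum>k\<in>{1..n}. real k * u k) \<le> (2/3) * (1 + U)" .
  have "(\<Sum>k\<in>{1..n}. 2 * u k - (if k = 1 then u 1 else 0)) \<le> (\<Sum>k\<in>{1..n}. real k * u k)"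
  proof (rule sum_mono)
    fix k assume "k \<in> {1..n}"
    then have "k = 1 \<or> k \<ge> 2" by auto
    then show "2 * u k - (if k = 1 then u 1 else 0) \<le> real k * u k"
    proof
      assume "k \<ge> 2" then have "2 * u k \<le> real k * u k" using u0[of k] by (intro mult_right_mono) auto
      then show ?thesis using \<open>k \<ge> 2\<close> by simp
    qed simp
  qed
  moreover have "(\<Sum>k\<in>{1..n}. 2 * u k - (if k = 1 then u 1 else 0)) = 2 * U - u 1"
    using False by (simp add: sum_subtractf sum_distrib_left U_def)
  ultimately have "2 * U - u 1 \<le> (2/3) * (1 + U)" using up by linarith
  then show ?thesis using u1 by (simp add: U_def u_def)
qed

lemma s_nonzero:
  fixes c :: "nat \<Rightarrow> complex"
  assumes c0: "c 0 = 1" and sb: "(\<Sum>k\<in>{1..n}. norm (c k)) \<le> 11/16" and z: "norm z \<le> 1"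
  shows "(\<Sum>k\<le>n. c k * z^k) \<noteq> 0"
proof
  assume h: "(\<Sum>k\<le>n. c k * z^k) = 0"
  have "{..n} = insert 0 {1..n}" by auto
  then have "(\<Sum>k\<le>n. c k * z^k) = 1 + (\<Sum>k\<in>{1..n}. c k * z^k)" using c0 by simp
  with h have "(\<Sum>k\<in>{1..n}. c k * z^k) = -1" by (simp add: add_eq_0_iff)
  then have "1 = norm (\<Sum>k\<in>{1..n}. c k * z^k)" by simp
  also have "\<dots> \<le> (\<Sum>k\<in>{1..n}. norm (c k * z^k))" by (rule norm_sum)
  also have "\<dots> \<le> (\<Sum>k\<in>{1..n}. norm (c k))"
  proof (rule sum_mono)
    fix k
    have "norm z ^ k \<le> 1" using z by (simp add: power_le_one)
    then show "norm (c k * z^k) \<le> norm (c k)"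
      by (simp add: norm_mult norm_power mult_left_le)
  qed
  finally show False using sb by simp
qed



lemma star_lt:
  fixes c :: "nat \<Rightarrow> complex"
  assumes nz: "\<And>z. norm z \<le> 1 \<Longrightarrow> (\<Sum>k\<le>n. c k * z^k) \<noteq> 0"
    and w: "norm w < 1"
  shows "norm (\<Sum>k\<le>n. cnj (c k) * w^(2*n+1-k)) < norm (\<Sum>k\<le>n. c k * w^k)"
proof -
  define s where "s z = (\<Sum>k\<le>n. c k * z^k)" for z
  define t where "t z = (\<Sum>k\<le>n. cnj (c k) * z^(n-k))" for z
  define g where "g z = t z / s z" for z
  have snz: "s z \<noteq> 0" if "z \<in> cball 0 1" for z using nz that by (simp add: s_def)
  have conts: "continuous_on (cball 0 1) s" unfolding s_def by (intro continuous_intros)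
  have contt: "continuous_on (cball 0 1) t" unfolding t_def by (intro continuous_intros)
  have holt: "t holomorphic_on ball 0 1" unfolding t_def by (intro holomorphic_intros)
  have hols: "s holomorphic_on ball 0 1" unfolding s_def by (intro holomorphic_intros)
  have gle: "norm (g z) \<le> 1" if "z \<in> cball 0 1" for z
  proof (rule maximum_modulus_frontier[where S="cball 0 1" and f=g])
    show "g holomorphic_on interior (cball 0 1)"
      unfolding g_def using holt hols snz by (auto intro!: holomorphic_intros)
    show "continuous_on (closure (cball 0 1)) g"
      unfolding g_def using conts contt snz by (auto intro!: continuous_intros)
    show "bounded (cball (0::complex) 1)" by simp
    show "z \<in> cball 0 1" by fact
    fix y :: complex assume "y \<in> frontier (cball 0 1)"
    then have y1: "norm y = 1" by (simp add: frontier_cball)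
    then have yc: "y * cnj y = 1" by (simp add: complex_norm_square[symmetric] power2_eq_square)
    have "t y = y^n * cnj (s y)"
    proof -
      have "t y = (\<Sum>k\<le>n. cnj (c k) * (y^n * cnj y ^ k))"
        unfolding t_def proof (rule sum.cong[OF refl])
        fix k assume "k \<in> {..n}"
        then have "y^n = y^(n-k) * y^k" by (simp add: power_add[symmetric])
        then have "y^n * cnj y ^ k = y^(n-k) * (y * cnj y)^k" by (simp add: power_mult_distrib)
        then show "cnj (c k) * y^(n-k) = cnj (c k) * (y^n * cnj y ^ k)" using yc by simp
      qed
      also have "\<dots> = y^n * cnj (s y)" by (simp add: s_def sum_distrib_left mult_ac)
      finally show ?thesis .
    qed
    then have "norm (t y) = norm (s y)" using y1 by (simp add: norm_mult norm_power)
    then show "norm (g y) \<le> 1" using snz[of y] y1 by (simp add: g_def norm_divide)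
  qed
  have "(\<Sum>k\<le>n. cnj (c k) * w^(2*n+1-k)) = w^(n+1) * t w"
  proof -
    have "(\<Sum>k\<le>n. cnj (c k) * w^(2*n+1-k)) = (\<Sum>k\<le>n. w^(n+1) * (cnj (c k) * w^(n-k)))"
    proof (rule sum.cong[OF refl])
      fix k assume "k \<in> {..n}"
      then have "2*n+1-k = (n+1) + (n-k)" by simp
      then have "w^(2*n+1-k) = w^(n+1) * w^(n-k)" by (simp only: power_add)
      then show "cnj (c k) * w^(2*n+1-k) = w^(n+1) * (cnj (c k) * w^(n-k))" by simp
    qed
    then show ?thesis by (simp add: t_def sum_distrib_left)
  qed
  also have "t w = g w * s w" using snz[of w] w by (simp add: g_def)
  finally have eq: "(\<Sum>k\<le>n. cnj (c k) * w^(2*n+1-k)) = w^(n+1) * g w * s w" by simp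
  have sw: "norm (s w) > 0" using snz[of w] w by simp
  have "norm (w^(n+1) * g w) < 1"
  proof -
    have "norm w ^ (n+1) < 1" using w by (subst power_less_one_iff) auto
    then have "norm (w^(n+1)) < 1" by (simp only: norm_power)
    moreover have "norm (g w) \<le> 1" using gle w by simp
    then have "norm (w^(n+1)) * norm (g w) \<le> norm (w^(n+1))" by (intro mult_left_le) auto
    ultimately show ?thesis unfolding norm_mult by linarith
  qed
  then have "norm (w^(n+1) * g w * s w) < norm (s w)"
    using sw by (simp add: norm_mult)
  then show ?thesis using eq by (simp add: s_def)
qed



lemma pow_help:
  fixes z :: complex
  assumes "z \<noteq> 0" "k \<le> N"
  shows "z^N * (1/z)^(N-k) = z^k"
proof -
  have "z^N = z^k * z^(N-k)" using assms(2) by (simp add: power_add[symmetric])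
  moreover have "z^(N-k) * (1/z)^(N-k) = 1" using assms(1) by (simp add: power_mult_distrib[symmetric])
  ultimately show ?thesis by (metis mult.assoc mult.right_neutral)
qed

lemma roots_generic:
  fixes c :: "nat \<Rightarrow> complex"
  assumes nz: "\<And>z. norm z \<le> 1 \<Longrightarrow> (\<Sum>k\<le>n. c k * z^k) \<noteq> 0"
    and root: "(\<Sum>k\<le>n. c k * z^k) + (\<Sum>k\<le>n. cnj (c k) * z^(2*n+1-k)) = 0"
  shows "norm z = 1"
proof -
  define s where "s z = (\<Sum>k\<le>n. c k * z^k)" for z
  define t where "t z = (\<Sum>k\<le>n. cnj (c k) * z^(2*n+1-k))" for z
  have lt: "norm (t w) < norm (s w)" if "norm w < 1" for w
    unfolding s_def t_def by (rule star_lt[OF nz that])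
  have no_in: "s w + t w \<noteq> 0" if "norm w < 1" for w
  proof
    assume "s w + t w = 0"
    then have "t w = - s w" by (simp add: add_eq_0_iff)
    then show False using lt[OF that] by simp
  qed
  have r: "s z + t z = 0" using root by (simp add: s_def t_def)
  show ?thesis
  proof (rule ccontr)
    assume "norm z \<noteq> 1"
    then consider "norm z < 1" | "norm z > 1" by linarith
    then show False
    proof cases
      case 1 then show False using no_in r by blast
    next
      case 2
      then have z0: "z \<noteq> 0" by auto
      define w where "w = 1 / cnj z"
      have cw: "cnj w = 1 / z" by (simp add: w_def)
      have nw: "norm w < 1" using 2 by (simp add: w_def norm_divide divide_simps)
      have e1: "s z = z^(2*n+1) * cnj (t w)"
      proof -
        have "z^(2*n+1) * cnj (t w) = (\<Sum>k\<le>n. c k * (z^(2*n+1) * (1/z)^(2*n+1-k)))"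
          by (simp add: t_def cw sum_distrib_left mult_ac)
        also have "\<dots> = s z" unfolding s_def
          by (rule sum.cong[OF refl]) (subst pow_help[OF z0], auto)
        finally show ?thesis by simp
      qed
      have e2: "t z = z^(2*n+1) * cnj (s w)"
      proof -
        have "z^(2*n+1) * cnj (s w) = (\<Sum>k\<le>n. cnj (c k) * (z^(2*n+1) * (1/z)^k))"
          by (simp add: s_def cw sum_distrib_left mult_ac)
        also have "\<dots> = t z" unfolding t_def
        proof (rule sum.cong[OF refl])
          fix k assume "k \<in> {..n}"
          then have "z^(2*n+1) * (1/z)^(2*n+1-(2*n+1-k)) = z^(2*n+1-k)"
            by (intro pow_help[OF z0]) auto
          moreover have "2*n+1-(2*n+1-k) = k" using \<open>k \<in> {..n}\<close> by auto
          ultimately show "cnj (c k) * (z^(2*n+1) * (1/z)^k) = cnj (c k) * z^(2*n+1-k)" by simp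
        qed
        finally show ?thesis by simp
      qed
      have "z^(2*n+1) * cnj (s w + t w) = 0" using r e1 e2 by (simp add: algebra_simps)
      then have "cnj (s w + t w) = 0" using z0 by simp
      then have "s w + t w = 0" by (metis complex_cnj_zero_iff)
      then show False using no_in[OF nw] by simp
    qed
  qed
qed

lemma logderiv:
  fixes zs :: "complex list"
  assumes "\<forall>z\<in>set zs. z \<noteq> 0"
  shows "fps_deriv (fps_of_poly (\<Prod>z\<leftarrow>zs. [:- z, 1:])) =
         - fps_of_poly (\<Prod>z\<leftarrow>zs. [:- z, 1:]) * Abs_fps (\<lambda>\<nu>. \<Sum>z\<leftarrow>zs. (1/z)^(\<nu>+1))"
  using assms
proof (induction zs)
  case Nil
  have "Abs_fps (\<lambda>\<nu>. 0::complex) = 0" by (simp add: fps_eq_iff)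
  then show ?case by simp
next
  case (Cons z zs)
  define Q where "Q = fps_of_poly (\<Prod>z\<leftarrow>zs. [:- z, 1:])"
  define S where "S = Abs_fps (\<lambda>\<nu>. \<Sum>z\<leftarrow>zs. (1/z)^(\<nu>+1))"
  define R where "R = Abs_fps (\<lambda>\<nu>. (1/z)^(\<nu>+1))"
  define L where "L = fps_const (- z) + fps_X"
  have z0: "z \<noteq> 0" using Cons.prems by simp
  have IH: "fps_deriv Q = - Q * S" using Cons by (simp add: Q_def S_def)
  have LR: "L * R = -1"
  proof (rule fps_ext)
    fix m
    show "(L * R) $ m = (-1) $ m"
    proof (cases m)
      case 0 then show ?thesis using z0 by (simp add: L_def R_def algebra_simps)
    next
      case (Suc k) then show ?thesis using z0 by (simp add: L_def R_def algebra_simps)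
    qed
  qed
  have PL: "fps_of_poly [:- z, 1:] = L" by (simp add: L_def fps_of_poly_pCons)
  have SS: "Abs_fps (\<lambda>\<nu>. \<Sum>w\<leftarrow>z#zs. (1/w)^(\<nu>+1)) = R + S"
    by (simp add: fps_eq_iff R_def S_def)
  have dL: "fps_deriv L = 1" by (simp add: L_def)
  have "fps_deriv (L * Q) = Q + L * (- Q * S)" by (simp add: fps_deriv_mult dL IH)
  also have "\<dots> = - (L * Q) * (R + S)"
  proof -
    have "Q = - Q * (L * R)" using LR by simp
    then have "Q = - (L * Q) * R" by (simp add: mult_ac)
    then show ?thesis by (simp add: algebra_simps)
  qed
  finally have fin: "fps_deriv (L * Q) = - (L * Q) * (R + S)" .
  have LQ: "fps_of_poly (\<Prod>w\<leftarrow>z#zs. [:- w, 1:]) = L * Q"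
    by (simp only: list.map prod_list.Cons fps_of_poly_mult PL Q_def)
  show ?case unfolding LQ SS using fin .
qed



lemma conv_zero:
  fixes c D :: "nat \<Rightarrow> complex"
  assumes c0: "c 0 = 1" and h: "\<And>k. k < n \<Longrightarrow> (\<Sum>i\<le>k. c i * D (k-i)) = 0"
  shows "k < n \<Longrightarrow> D k = 0"
proof (induction k rule: less_induct)
  case (less k)
  have "{..k} = insert 0 {1..k}" by auto
  then have "(\<Sum>i\<le>k. c i * D (k-i)) = D k + (\<Sum>i\<in>{1..k}. c i * D (k-i))" using c0 by simp
  also have "(\<Sum>i\<in>{1..k}. c i * D (k-i)) = 0"
    by (rule sum.neutral) (use less in auto)
  finally show ?case using h[OF less.prems] by simp
qed

lemma powsum_norm:
  fixes zs :: "complex list"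
  assumes "\<forall>z\<in>set zs. norm z = 1"
  shows "norm (\<Sum>z\<leftarrow>zs. (1/z)^m) \<le> real (length zs)"
  using assms
proof (induction zs)
  case Nil then show ?case by simp
next
  case (Cons z zs)
  have "norm ((1/z)^m) = 1" using Cons.prems by (simp add: norm_power norm_divide)
  then have "norm (\<Sum>w\<leftarrow>z#zs. (1/w)^m) \<le> 1 + norm (\<Sum>w\<leftarrow>zs. (1/w)^m)"
    by (simp add: norm_triangle_ineq[THEN order_trans])
  then show ?case using Cons by simp
qed

theorem theorem1p2:
  fixes n :: nat and a :: "nat \<Rightarrow> complex" and zs :: "complex list"
  assumes "n \<ge> 1"
    and "\<And>j. norm (a j) \<le> 1 / (real j + 2) ^ 2"
    and "length zs = 2 * n + 1"
    and "P_poly (fser a) n = smult (lead_coeff (P_poly (fser a) n)) (\<Prod>z\<leftarrow>zs. [:- z, 1:])"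
  shows "(\<forall>j<n. Spow zs (j + 1) - a j = 0) \<and>
         (\<forall>j\<ge>n. \<forall>r::real. 0 < r \<and> r < 1 \<longrightarrow>
            norm (Spow zs (j + 1) - a j)
              \<le> r powr (real n - real j) / (1 - r ^ (n + 1)) * (15 * real n + 30 / (1 - r)))"
proof -
  note ab = assms(2)
  define c where "c = tcoeff (fser a)"
  define P where "P = P_poly (fser a) n"
  define lc where "lc = lead_coeff P"
  have c0: "c 0 = 1" using analytic_part(1)[OF ab] by (simp add: c_def)
  have dE: "fps_deriv (Abs_fps c) = - Abs_fps a * Abs_fps c"
    using analytic_part(2)[OF ab] by (simp add: c_def)
  have rec: "of_nat (k+1) * c (k+1) = - (\<Sum>i\<le>k. a i * c (k-i))" for k
  proof -
    have "of_nat (k+1) * c (k+1) = fps_deriv (Abs_fps c) $ k" by (simp add: fps_deriv_nth)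
    also have "\<dots> = (\<Sum>i=0..k. - a i * c (k-i))" by (simp add: dE fps_mult_nth sum_negf)
    also have "\<dots> = - (\<Sum>i\<le>k. a i * c (k-i))" by (simp add: atLeast0AtMost sum_negf)
    finally show ?thesis .
  qed
  have sb: "(\<Sum>k\<in>{1..n}. norm (c k)) \<le> 11/16" by (rule coef_sum_bound[OF c0 rec ab])
  have nz: "(\<Sum>k\<le>n. c k * z^k) \<noteq> 0" if "norm z \<le> 1" for z
    by (rule s_nonzero[OF c0 sb that])
  have polyP: "poly P z = (\<Sum>k\<le>n. c k * z^k) + (\<Sum>k\<le>n. cnj (c k) * z^(2*n+1-k))" for z
    by (simp add: P_def P_poly_def s_poly_def poly_sum poly_monom c_def)
  have Pfac: "P = smult lc (\<Prod>z\<leftarrow>zs. [:- z, 1:])" using assms(4) by (simp add: P_def lc_def)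
  have root: "poly P z = 0" if "z \<in> set zs" for z
  proof -
    have "poly (\<Prod>z\<leftarrow>zs. [:- z, 1:]) x = (\<Prod>w\<leftarrow>zs. x - w)" for x
      by (induction zs) (auto simp: algebra_simps)
    then have "poly (\<Prod>z\<leftarrow>zs. [:- z, 1:]) z = (\<Prod>w\<leftarrow>zs. z - w)" .
    also have "\<dots> = 0" using that by (simp add: prod_list_zero_iff)
    finally show ?thesis by (simp add: Pfac)
  qed
  have circ: "norm z = 1" if "z \<in> set zs" for z
    by (rule roots_generic[OF nz]) (use root[OF that] polyP in auto)
  have part2: "norm (Spow zs (j + 1) - a j)
              \<le> r powr (real n - real j) / (1 - r ^ (n + 1)) * (15 * real n + 30 / (1 - r))"
    if "j \<ge> n" "0 < r" "r < 1" for j r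
  proof -
    have "norm (Spow zs (j+1) - a j) \<le> norm (Spow zs (j+1)) + norm (a j)" by (rule norm_triangle_ineq4)
    also have "norm (Spow zs (j+1)) \<le> real (2*n+1)"
      using powsum_norm[of zs "j+1"] circ assms(3) by (simp add: Spow_def)
    also have "norm (a j) \<le> 1"
    proof -
      have "(1::real) \<le> (real j + 2)^2" by (rule one_le_power) simp
      then have "1/(real j+2)^2 \<le> 1" by simp
      then show ?thesis using ab[of j] by linarith
    qed
    finally have L: "norm (Spow zs (j+1) - a j) \<le> 15 * real n + 30" by simp
    have p1: "r powr (real n - real j) \<ge> 1"
    proof -
      have "r powr (real j - real n) \<le> 1" using that by (intro powr_le1) auto
      moreover have "r powr (real n - real j) = inverse (r powr (real j - real n))"
        using that by (simp add: powr_minus[symmetric])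
      moreover have "r powr (real j - real n) > 0" using that by simp
      ultimately show ?thesis by (simp add: one_le_inverse)
    qed
    have "r^(n+1) < 1" using that by (subst power_less_one_iff) auto
    moreover have "r^(n+1) \<ge> 0" using that by simp
    ultimately have rn: "0 < 1 - r^(n+1)" "1 - r^(n+1) \<le> 1" by linarith+
    have p2: "1 / (1 - r^(n+1)) \<ge> 1" using rn by simp
    have "30 \<le> 30 / (1 - r)" using that by (simp add: divide_simps)
    then have p3: "15 * real n + 30 / (1 - r) \<ge> 15 * real n + 30" by simp
    have m1: "1 \<le> r powr (real n - real j) * (1 / (1 - r ^ (n + 1)))"
      using mult_mono[OF p1 p2] by simp
    have nn: "0 \<le> 15 * real n + 30 / (1 - r)" using p3 by linarith
    have "15 * real n + 30 \<le> 1 * (15 * real n + 30 / (1 - r))" using p3 by simp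
    also have "\<dots> \<le> (r powr (real n - real j) * (1 / (1 - r ^ (n + 1)))) * (15 * real n + 30 / (1 - r))"
      by (rule mult_right_mono[OF m1 nn])
    also have "\<dots> = r powr (real n - real j) / (1 - r ^ (n + 1)) * (15 * real n + 30 / (1 - r))"
      by simp
    finally show ?thesis using L by linarith
  qed
  have part1: "Spow zs (j + 1) - a j = 0" if "j < n" for j
  proof -
    define Q where "Q = fps_of_poly (\<Prod>z\<leftarrow>zs. [:- z, 1:])"
    define S where "S = Abs_fps (\<lambda>\<nu>. \<Sum>z\<leftarrow>zs. (1/z)^(\<nu>+1))"
    define Pf where "Pf = fps_of_poly P"
    have z0: "\<forall>z\<in>set zs. z \<noteq> 0" using circ by fastforce
    have dQ: "fps_deriv Q = - Q * S" using logderiv[OF z0] by (simp add: Q_def S_def)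
    have PfQ: "Pf = fps_const lc * Q" by (simp add: Pf_def Pfac Q_def fps_of_poly_smult)
    have dP: "fps_deriv Pf = - Pf * S" by (simp add: PfQ dQ)
    have cP: "Pf $ k = c k" if "k \<le> n" for k
    proof -
      have "Pf $ k = coeff P k" by (simp add: Pf_def)
      also have "\<dots> = coeff (s_poly (fser a) n) k + coeff (\<Sum>i\<le>n. monom (cnj (c i)) (2*n+1-i)) k"
        unfolding P_def P_poly_def c_def by (rule coeff_add)
      also have "coeff (\<Sum>i\<le>n. monom (cnj (c i)) (2*n+1-i)) k = (\<Sum>i\<le>n. coeff (monom (cnj (c i)) (2*n+1-i)) k)"
        by (rule coeff_sum)
      also have "\<dots> = 0"
      proof (rule sum.neutral, rule ballI)
        fix i assume "i \<in> {..n}"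
        then have "2*n+1-i \<noteq> k" using that by auto
        then show "coeff (monom (cnj (c i)) (2*n+1-i)) k = 0" by (simp only: coeff_monom if_False)
      qed
      also have "coeff (s_poly (fser a) n) k = (\<Sum>i\<le>n. coeff (monom (c i) i) k)"
        unfolding s_poly_def c_def by (rule coeff_sum)
      also have "\<dots> = (\<Sum>i\<le>n. if i = k then c i else 0)"
        by (simp only: coeff_monom)
      also have "\<dots> = c k" using that by (simp add: sum.delta')
      finally show ?thesis by simp
    qed
    have hk: "(\<Sum>i\<le>k. c i * (S $ (k-i) - a (k-i))) = 0" if "k < n" for k
    proof -
      have "(Pf * S) $ k = - (fps_deriv Pf $ k)" by (simp add: dP)
      also have "\<dots> = - (of_nat (k+1) * c (k+1))" using that by (simp add: fps_deriv_nth cP)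
      also have "\<dots> = (\<Sum>i\<le>k. a i * c (k-i))" by (simp only: rec minus_minus)
      also have "\<dots> = (Abs_fps a * Abs_fps c) $ k" by (simp add: fps_mult_nth atLeast0AtMost)
      also have "\<dots> = (Abs_fps c * Abs_fps a) $ k" by (simp add: mult.commute)
      also have "\<dots> = (\<Sum>i\<le>k. c i * a (k-i))" by (simp add: fps_mult_nth atLeast0AtMost)
      finally have e1: "(Pf * S) $ k = (\<Sum>i\<le>k. c i * a (k-i))" .
      have "(Pf * S) $ k = (\<Sum>i\<le>k. Pf $ i * S $ (k-i))" by (simp add: fps_mult_nth atLeast0AtMost)
      also have "\<dots> = (\<Sum>i\<le>k. c i * S $ (k-i))" by (rule sum.cong) (use that cP in auto)
      finally have "(\<Sum>i\<le>k. c i * S $ (k-i)) = (\<Sum>i\<le>k. c i * a (k-i))" using e1 by simp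
      then show ?thesis by (simp add: algebra_simps sum_subtractf)
    qed
    have "S $ j - a j = 0"
      using conv_zero[of c n "\<lambda>m. S $ m - a m", OF c0 hk that] by simp
    then show ?thesis by (simp add: S_def Spow_def)
  qed
  show ?thesis using part1 part2 by blast
qed

end
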